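(* Let $p>3$ be prime, $t\in\{1,3,p,3p\}$, and $1\le r\le 3p-1$ with $\gcd(r,3p)=1$. Then $\mathcal{S}(p,r,t)=p$ if $r\equiv 2\pmod 3$ and $|r|_p$ is odd, and $\mathcal{S}(p,r,t)=0$ otherwise.
   Context: $|r|_m$ is the multiplicative order of $r$ modulo $m$ (with $|r|_1=1$). $S_k(x):=1+x+\cdots+x^{k-1}$, $S_0:=0$. For $m\ge1$ with $\gcd(r,m)=1$, $\kappa(m,r,t):=\dfrac{m|r|_m}{\gcd(m,\,tS_{|r|_m}(r))}$. For $d\in\{1,3,p,3p\}$, $\Lambda(d,r,t):=\{\ell>0:\ \ell \text{ divides } \frac{|r|_{3p}}{\gcd(\kappa(d,r,t),|r|_{3p})}\text{ and }\gcd(r^{\ell\kappa(d,r,t)}-1,3p)=d\}$, and $\mathcal{S}(d,r,t):=\sum_{\ell\in\Lambda(d,r,t)} d\,\phi\!\left(\frac{|r|_{3p}}{\ell\gcd(\kappa(d,r,t),|r|_{3p})}\right)$, with $\phi$ Euler's function. *)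

theory Defs
  imports "HOL-Number_Theory.Number_Theory"
begin

definition Sgeom :: "nat \<Rightarrow> nat \<Rightarrow> nat" where
  "Sgeom k x = (\<Sum>i<k. x ^ i)"

text \<open>kappa(m,r,t) = m |r|_m / gcd(m, t S_{|r|_m}(r)); ord is the multiplicative order.\<close>
definition kappa :: "nat \<Rightarrow> nat \<Rightarrow> nat \<Rightarrow> nat" where
  "kappa m r t = (m * ord m r) div gcd m (t * Sgeom (ord m r) r)"

definition Lambda :: "nat \<Rightarrow> nat \<Rightarrow> nat \<Rightarrow> nat \<Rightarrow> nat set" where
  "Lambda p d r t = {l. l > 0 \<and>
      l dvd (ord (3*p) r div gcd (kappa d r t) (ord (3*p) r)) \<and>
      gcd (r ^ (l * kappa d r t) - 1) (3*p) = d}"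

definition Ssum :: "nat \<Rightarrow> nat \<Rightarrow> nat \<Rightarrow> nat \<Rightarrow> nat" where
  "Ssum p d r t = (\<Sum>l\<in>Lambda p d r t.
      d * totient (ord (3*p) r div (l * gcd (kappa d r t) (ord (3*p) r))))"

end

theory Submission imports Defs begin

lemma geo0: "(x::nat) \<ge> 1 \<Longrightarrow> (x - 1) * Sgeom k x + 1 = x ^ k"
proof (induction k)
  case 0 then show ?case by (simp add: Sgeom_def)
next
  case (Suc k)
  have "Sgeom (Suc k) x = Sgeom k x + x^k" by (simp add: Sgeom_def)
  hence "(x - 1) * Sgeom (Suc k) x + 1 = ((x - 1) * Sgeom k x + 1) + (x-1)*x^k"
    by (simp add: distrib_left)
  also have "\<dots> = x^k + (x-1)*x^k" using Suc.IH[OF Suc.prems] by simp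
  also have "\<dots> = (1 + (x - 1)) * x^k" by (simp add: distrib_right)
  also have "1 + (x - 1) = x" using Suc.prems by simp
  finally show ?case by simp
qed

lemma geo: "(x::nat) \<ge> 1 \<Longrightarrow> (x - 1) * Sgeom k x = x ^ k - 1"
  using geo0[of x k] by simp

lemma dvd2: "(l::nat) dvd 2 \<longleftrightarrow> l = 1 \<or> l = 2"
proof
  assume h: "l dvd 2"
  hence "l \<le> 2" "l > 0" using dvd_imp_le by (auto intro!: Nat.gr0I)
  thus "l = 1 \<or> l = 2" using h by auto
qed auto

lemma not3p: "prime (p::nat) \<Longrightarrow> p > 3 \<Longrightarrow> \<not> 3 dvd p"
  unfolding prime_nat_iff by force

lemma oddp: "prime (p::nat) \<Longrightarrow> p > 3 \<Longrightarrow> odd p"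
  unfolding prime_nat_iff by force

lemma mod3: "coprime (r::nat) 3 \<Longrightarrow> r mod 3 = 1 \<or> r mod 3 = 2"
proof -
  assume c: "coprime r 3"
  have "\<not> 3 dvd r"
  proof
    assume "3 dvd r" hence "3 dvd gcd r 3" by simp
    thus False using c by simp
  qed
  hence "r mod 3 \<noteq> 0" by presburger
  thus ?thesis by linarith
qed

lemma key:
  fixes p m :: nat
  assumes "prime p" "p > 3"
  shows "gcd m (3*p) = p \<longleftrightarrow> p dvd m \<and> \<not> 3 dvd m"
proof
  assume h: "gcd m (3*p) = p"
  hence "p dvd m" by (metis gcd_dvd1)
  moreover have "\<not> 3 dvd m"
  proof
    assume "3 dvd m"
    hence "3 dvd gcd m (3*p)" by simp
    hence "3 dvd p" using h by simp
    thus False using not3p[OF assms] by simp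
  qed
  ultimately show "p dvd m \<and> \<not> 3 dvd m" by simp
next
  assume h: "p dvd m \<and> \<not> 3 dvd m"
  have "p dvd gcd m (3*p)" using h by simp
  moreover have "coprime (gcd m (3*p)) 3"
    proof -
    have "\<not> 3 dvd gcd m (3*p)" using h by (meson dvd_trans gcd_dvd1)
    hence "coprime 3 (gcd m (3*p))" by (intro prime_imp_coprime_nat) auto
    thus ?thesis by (simp add: coprime_commute)
  qed
  hence "gcd m (3*p) dvd p" by (metis coprime_dvd_mult_right_iff gcd_dvd2)
  ultimately show "gcd m (3*p) = p" by (simp add: dvd_antisym)
qed

lemma ord3: "coprime (r::nat) 3 \<Longrightarrow> ord 3 r = (if r mod 3 = 1 then 1 else 2)"
proof -
  assume c: "coprime r 3"
  have "r mod 3 = 1 \<or> r mod 3 = 2" using mod3[OF c] .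
  thus ?thesis
  proof
    assume "r mod 3 = 1"
    thus ?thesis using ord_eq_Suc_0_iff[of 3 r] by (simp add: cong_def)
  next
    assume h: "r mod 3 = 2"
    have "[r \<noteq> 1] (mod 3)" using h by (simp add: cong_def)
    moreover have "[r^2 = 1] (mod 3)"
    proof -
      have "[r^2 = 2^2] (mod 3)" using h by (metis cong_pow cong_def mod_mod_trivial)
      thus ?thesis by (simp add: cong_def)
    qed
    ultimately show ?thesis using h ord_eq_2_iff[of 3 r] by simp
  qed
qed

lemma dvd_pow_minus1: "(r::nat) \<ge> 1 \<Longrightarrow> m dvd r^k - 1 \<longleftrightarrow> ord m r dvd k"
proof -
  assume "r \<ge> 1"
  hence "r^k \<ge> 1" by simp
  hence "[r^k = 1] (mod m) \<longleftrightarrow> m dvd r^k - 1" by (simp add: cong_altdef_nat)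
  thus ?thesis using ord_divides by blast
qed

theorem lemma5p7:
  fixes p r t :: nat
  assumes "prime p" and "p > 3"
    and "t \<in> {1, 3, p, 3*p}"
    and "1 \<le> r" and "r \<le> 3*p - 1" and "coprime r (3*p)"
  shows "Ssum p p r t = (if r mod 3 = 2 \<and> odd (ord p r) then p else 0)"
proof -
  define q where "q = ord p r"
  define o3 where "o3 = ord 3 r"
  define n where "n = ord (3*p) r"
  define \<kappa> where "\<kappa> = kappa p r t"
  have cp: "coprime r p" "coprime r 3" using assms(6) by auto
  have cp3: "coprime 3 p" using prime_imp_coprime_nat[OF _ not3p[OF assms(1,2)]] by simp
  have n: "n = lcm o3 q" unfolding n_def o3_def q_def using ord_modulus_mult_coprime[OF cp3] by simp
  have o3: "o3 = (if r mod 3 = 1 then 1 else 2)" unfolding o3_def using ord3 cp(2) by simp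
  have opos: "q > 0" unfolding q_def using cp by (simp add: coprime_commute)
  have Lam: "Lambda p p r t = {l. l > 0 \<and> l dvd (n div gcd \<kappa> n) \<and> \<not> o3 dvd l * \<kappa> \<and> q dvd l * \<kappa>}"
    unfolding Lambda_def n_def[symmetric] \<kappa>_def[symmetric]
    using key[OF assms(1,2)] dvd_pow_minus1[OF assms(4)] q_def o3_def by blast
  have Ss: "Ssum p p r t = (\<Sum>l\<in>Lambda p p r t. p * totient (n div (l * gcd \<kappa> n)))"
    unfolding Ssum_def n_def \<kappa>_def ..
  show ?thesis
  proof (cases "[r = 1] (mod p) \<and> (t = 1 \<or> t = 3)")
    case True
    have o1: "q = 1" unfolding q_def using True ord_eq_Suc_0_iff by simp
    have S1: "Sgeom 1 r = 1" by (simp add: Sgeom_def)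
    have "gcd p t = 1" using True cp3 by (auto simp: coprime_commute)
    hence k: "\<kappa> = p" unfolding \<kappa>_def kappa_def q_def[symmetric] o1 S1 by simp
    have nn: "n = o3" using n o1 by simp
    have g: "gcd p o3 = 1" using o3 oddp[OF assms(1,2)]
      by (cases "r mod 3 = 1") (simp_all add: gcd.commute)
    show ?thesis
    proof (cases "r mod 3 = 1")
      case True
      hence "Lambda p p r t = {}" unfolding Lam using o3 by auto
      thus ?thesis using Ss True by simp
    next
      case False
      have "odd p" using oddp[OF assms(1,2)] .
      hence "Lambda p p r t = {1}" unfolding Lam using o3 False k nn g o1
        by (auto simp: dvd2 elim: oddE)
      moreover have "r mod 3 = 2" using False cp(2) o3 using mod3 by blast
      ultimately show ?thesis using Ss o1 o3 False nn k g q_def by simp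
    qed
  next
    case False
    have "p dvd t * Sgeom q r"
    proof (cases "[r = 1] (mod p)")
      case True
      hence "t = p \<or> t = 3*p" using False assms(3) by auto
      thus ?thesis by auto
    next
      case nc: False
      have "p dvd r^q - 1" using dvd_pow_minus1[OF assms(4)] q_def by simp
      hence "p dvd (r - 1) * Sgeom q r" using geo[OF assms(4)] by simp
      moreover have "\<not> p dvd r - 1" using nc assms(4) by (simp add: cong_altdef_nat cong_sym_eq)
      ultimately show ?thesis using assms(1) prime_dvd_mult_iff by blast
    qed
    hence "gcd p (t * Sgeom q r) = p" by simp
    hence k: "\<kappa> = q" unfolding \<kappa>_def kappa_def q_def[symmetric] using assms(1) by (simp add: prime_gt_0_nat)
    have gk: "gcd \<kappa> n = q" using k n by simp
    show ?thesis
    proof (cases "r mod 3 = 1")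
      case True
      hence "Lambda p p r t = {}" unfolding Lam using o3 by auto
      thus ?thesis using Ss True by simp
    next
      case F3: False
      have r2: "r mod 3 = 2" using F3 cp(2) using mod3 by blast
      have o32: "o3 = 2" using o3 F3 by simp
      show ?thesis
      proof (cases "odd q")
        case True
        have nn: "n = 2 * q" using n o32 True by (simp add: lcm_nat_def gcd.commute coprime_iff_gcd_eq_1[symmetric])
        have "n div gcd \<kappa> n = 2" using nn gk opos by simp
        hence "Lambda p p r t = {1}" unfolding Lam using o32 k True
          by (auto simp: dvd2)
        thus ?thesis using Ss r2 True gk nn opos q_def by simp
      next
        case False
        hence "Lambda p p r t = {}" unfolding Lam using o32 k by auto
        thus ?thesis using Ss False q_def by simp
      qed
    qed
  qed
qed

end
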